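(* Let $(S,\mu)$ be a complete, $\sigma$-finite positive measure space and let $X$ be a Banach space whose norm is Fréchet differentiable. A non-zero $f\in L^1(\mu,X)$ is approximately smooth if and only if $f(s)\neq 0$ for $\mu$-almost every $s\in S$.
   Context: $L^1(\mu,X)$ is the Lebesgue–Bochner space of (classes of a.e. equal) strongly measurable $f:S\to X$ with $\|f\|=\int_S\|f(s)\|\,d\mu(s)<\infty$. For a non-zero $x$ in a normed space $Y$, $J(x)$ denotes the set of support functionals at $x$, i.e. norm-one $F\in Y^*$ with $F(x)=\|x\|$; $x$ is approximately smooth if $\operatorname{diam}J(x)=\sup\{\|F-G\|:F,G\in J(x)\}<2$. The norm of $X$ is Fréchet differentiable if for every non-zero $x\in X$ there is $\varphi\in X^*$ with $\lim_{h\to0}\big|\|x+h\|-\|x\|-\varphi(h)\big|/\|h\|=0$. *)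

theory Defs
  imports "HOL-Analysis.Analysis"
begin

definition strongly_measurable :: "'a measure \<Rightarrow> ('a \<Rightarrow> 'b::real_normed_vector) \<Rightarrow> bool" where
  "strongly_measurable M f \<longleftrightarrow>
     (\<exists>u :: nat \<Rightarrow> 'a \<Rightarrow> 'b. (\<forall>n. simple_function M (u n)) \<and>
        (AE s in M. (\<lambda>n. u n s) \<longlonglongrightarrow> f s))"

text \<open>The Lebesgue--Bochner L1 norm and membership in L1(mu, X)
  (elements are represented by functions; a.e.-equal ones have distance 0).\<close>
definition L1_norm :: "'a measure \<Rightarrow> ('a \<Rightarrow> 'b::real_normed_vector) \<Rightarrow> real" where
  "L1_norm M f = enn2real (\<integral>\<^sup>+ s. ennreal (norm (f s)) \<partial>M)"

definition L1 :: "'a measure \<Rightarrow> ('a \<Rightarrow> 'b::real_normed_vector) \<Rightarrow> bool" where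
  "L1 M f \<longleftrightarrow> strongly_measurable M f \<and> (\<integral>\<^sup>+ s. ennreal (norm (f s)) \<partial>M) < \<infinity>"

text \<open>Continuous linear functionals on L1(mu, X) (only their values on L1 matter).\<close>
definition L1_dual :: "'a measure \<Rightarrow> ((('a \<Rightarrow> 'b::real_normed_vector) \<Rightarrow> real) set)" where
  "L1_dual M = {F. (\<forall>g h. L1 M g \<longrightarrow> L1 M h \<longrightarrow> F (\<lambda>s. g s + h s) = F g + F h) \<and>
                   (\<forall>c g. L1 M g \<longrightarrow> F (\<lambda>s. c *\<^sub>R g s) = c * F g) \<and>
                   (\<exists>K. \<forall>g. L1 M g \<longrightarrow> \<bar>F g\<bar> \<le> K * L1_norm M g)}"

definition L1_dual_norm :: "'a measure \<Rightarrow> (('a \<Rightarrow> 'b::real_normed_vector) \<Rightarrow> real) \<Rightarrow> real" where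
  "L1_dual_norm M F = (SUP g\<in>{g. L1 M g \<and> L1_norm M g \<le> 1}. \<bar>F g\<bar>)"

definition support_functionals :: "'a measure \<Rightarrow> ('a \<Rightarrow> 'b::real_normed_vector) \<Rightarrow> (('a \<Rightarrow> 'b) \<Rightarrow> real) set" where
  "support_functionals M f =
     {F \<in> L1_dual M. L1_dual_norm M F = 1 \<and> F f = L1_norm M f}"

definition diam_J :: "'a measure \<Rightarrow> ('a \<Rightarrow> 'b::real_normed_vector) \<Rightarrow> real" where
  "diam_J M f = (SUP (F, G) \<in> support_functionals M f \<times> support_functionals M f.
                   L1_dual_norm M (\<lambda>g. F g - G g))"

definition approx_smooth_L1 :: "'a measure \<Rightarrow> ('a \<Rightarrow> 'b::real_normed_vector) \<Rightarrow> bool" where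
  "approx_smooth_L1 M f \<longleftrightarrow> L1_norm M f \<noteq> 0 \<and> diam_J M f < 2"

definition frechet_smooth_norm :: "'b::real_normed_vector itself \<Rightarrow> bool" where
  "frechet_smooth_norm _ \<longleftrightarrow> (\<forall>x::'b. x \<noteq> 0 \<longrightarrow> (\<exists>\<phi>. (norm has_derivative \<phi>) (at x)))"

end

theory Submission
  imports Defs
begin

lemma SM_meas:
  fixes g :: "'a \<Rightarrow> 'b::real_normed_vector"
  assumes c: "complete_measure M" and sm: "strongly_measurable M g"
  shows "g \<in> borel_measurable M"
proof -
  obtain u where u: "\<And>n. simple_function M (u n)" and ae: "AE s in M. (\<lambda>n. u n s) \<longlonglongrightarrow> g s"
    using sm unfolding strongly_measurable_def by blast
  define N where "N = {s\<in>space M. \<not> (\<lambda>n. u n s) \<longlonglongrightarrow> g s}"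
  have N: "N \<in> null_sets M" using ae complete_measure.AE_iff_null_sets[OF c, of "\<lambda>s. (\<lambda>n. u n s) \<longlonglongrightarrow> g s"] unfolding N_def by simp
  hence Ns: "N \<in> sets M" by auto
  define g' where "g' s = (if s \<in> N then 0 else g s)" for s
  have um: "(\<lambda>s. if s \<in> N then 0 else u n s) \<in> borel_measurable M" for n
    by (rule measurable_If_set) (use u borel_measurable_simple_function Ns in auto)
  have g': "g' \<in> borel_measurable M"
  proof (rule borel_measurable_LIMSEQ_metric[OF um])
    fix s assume "s \<in> space M"
    then show "(\<lambda>n. if s \<in> N then 0 else u n s) \<longlonglongrightarrow> g' s"
      unfolding g'_def N_def by auto
  qed
  have aeN: "AE s in M. s \<notin> N" using N by (rule AE_not_in)
  show ?thesis
  proof (rule measurableI)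
    fix A :: "'b set" assume A: "A \<in> sets borel"
    have s1: "g' -` A \<inter> space M \<in> sets M" using g' A by (rule measurable_sets)
    show "g -` A \<inter> space M \<in> sets M"
    proof (rule complete_measure.in_sets_AE[OF c _ s1])
      show "AE x in M. (x \<in> g' -` A \<inter> space M) = (x \<in> g -` A \<inter> space M)"
        using aeN by eventually_elim (auto simp: g'_def)
    qed auto
  qed auto
qed

lemma SM_lin:
  fixes f g :: "'a \<Rightarrow> 'b::real_normed_vector"
  assumes "strongly_measurable M f" "strongly_measurable M g"
  shows "strongly_measurable M (\<lambda>s. f s + c *\<^sub>R g s)"
proof -
  obtain u where u: "\<And>n. simple_function M (u n)" and ae1: "AE s in M. (\<lambda>n. u n s) \<longlonglongrightarrow> f s"
    using assms(1) unfolding strongly_measurable_def by blast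
  obtain v where v: "\<And>n. simple_function M (v n)" and ae2: "AE s in M. (\<lambda>n. v n s) \<longlonglongrightarrow> g s"
    using assms(2) unfolding strongly_measurable_def by blast
  have "\<forall>n. simple_function M (\<lambda>s. u n s + c *\<^sub>R v n s)"
    using simple_function_compose2[OF u v, of "\<lambda>a b. a + c *\<^sub>R b"] by blast
  moreover have "AE s in M. (\<lambda>n. u n s + c *\<^sub>R v n s) \<longlonglongrightarrow> f s + c *\<^sub>R g s"
    using ae1 ae2 by eventually_elim (intro tendsto_intros)
  ultimately show ?thesis unfolding strongly_measurable_def
    by (intro exI[of _ "\<lambda>n s. u n s + c *\<^sub>R v n s"]) simp
qed

lemma SM_scale:
  fixes g :: "'a \<Rightarrow> 'b::real_normed_vector"
  assumes "strongly_measurable M g"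
  shows "strongly_measurable M (\<lambda>s. c *\<^sub>R g s)"
proof -
  obtain v where v: "\<And>n. simple_function M (v n)" and ae2: "AE s in M. (\<lambda>n. v n s) \<longlonglongrightarrow> g s"
    using assms unfolding strongly_measurable_def by blast
  have "\<forall>n. simple_function M (\<lambda>s. c *\<^sub>R v n s)"
    using simple_function_compose1[OF v, of "\<lambda>b. c *\<^sub>R b"] by blast
  moreover have "AE s in M. (\<lambda>n. c *\<^sub>R v n s) \<longlonglongrightarrow> c *\<^sub>R g s"
    using ae2 by eventually_elim (intro tendsto_intros)
  ultimately show ?thesis unfolding strongly_measurable_def
    by (intro exI[of _ "\<lambda>n s. c *\<^sub>R v n s"]) simp
qed

lemma SM_simple:
  fixes g :: "'a \<Rightarrow> 'b::real_normed_vector"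
  assumes "simple_function M g"
  shows "strongly_measurable M g"
  unfolding strongly_measurable_def using assms by (intro exI[of _ "\<lambda>n. g"]) auto

lemma L1_int:
  fixes g :: "'a \<Rightarrow> 'b::real_normed_vector"
  assumes c: "complete_measure M" and L: "L1 M g"
  shows "integrable M (\<lambda>s. norm (g s))" "L1_norm M g = (\<integral>s. norm (g s) \<partial>M)"
proof -
  have m: "g \<in> borel_measurable M" using SM_meas[OF c] L unfolding L1_def by blast
  then have mn: "(\<lambda>s. norm (g s)) \<in> borel_measurable M" by measurable
  show "integrable M (\<lambda>s. norm (g s))"
    using mn L unfolding L1_def by (intro integrableI_bounded) auto
  show "L1_norm M g = (\<integral>s. norm (g s) \<partial>M)"
    unfolding L1_norm_def using mn by (subst integral_eq_nn_integral) auto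
qed

lemma L1_lin:
  fixes f g :: "'a \<Rightarrow> 'b::real_normed_vector"
  assumes c: "complete_measure M" and Lf: "L1 M f" and Lg: "L1 M g"
  shows "L1 M (\<lambda>s. f s + c *\<^sub>R g s)"
proof -
  have sm: "strongly_measurable M (\<lambda>s. f s + c *\<^sub>R g s)"
    using SM_lin Lf Lg unfolding L1_def by blast
  then have "(\<lambda>s. f s + c *\<^sub>R g s) \<in> borel_measurable M" using SM_meas[OF c] by blast
  then have mn: "(\<lambda>s. norm (f s + c *\<^sub>R g s)) \<in> borel_measurable M" by measurable
  have i: "integrable M (\<lambda>s. norm (f s) + \<bar>c\<bar> * norm (g s))"
    using L1_int(1)[OF c Lf] L1_int(1)[OF c Lg] by auto
  have "integrable M (\<lambda>s. norm (f s + c *\<^sub>R g s))"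
  proof (rule Bochner_Integration.integrable_bound[OF i mn])
    show "AE x in M. norm (norm (f x + c *\<^sub>R g x)) \<le> norm (norm (f x) + \<bar>c\<bar> * norm (g x))"
      by (auto intro!: order_trans[OF norm_triangle_ineq])
  qed
  then have "(\<integral>\<^sup>+ s. ennreal (norm (f s + c *\<^sub>R g s)) \<partial>M) < \<infinity>"
    unfolding integrable_iff_bounded by simp
  with sm show ?thesis unfolding L1_def by blast
qed

lemma L1_zero: "L1 M (\<lambda>s. 0)"
  unfolding L1_def using SM_simple[of M "\<lambda>s. 0"] by simp

lemma L1_scale:
  fixes g :: "'a \<Rightarrow> 'b::real_normed_vector"
  assumes c: "complete_measure M" and Lg: "L1 M g"
  shows "L1 M (\<lambda>s. c *\<^sub>R g s)"
  using L1_lin[OF c L1_zero Lg, of c] by simp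

lemma L1_norm_scale:
  fixes g :: "'a \<Rightarrow> 'b::real_normed_vector"
  assumes c: "complete_measure M" and Lg: "L1 M g"
  shows "L1_norm M (\<lambda>s. c *\<^sub>R g s) = \<bar>c\<bar> * L1_norm M g"
  using L1_int(2)[OF c Lg] L1_int(2)[OF c L1_scale[OF c Lg, of c]] by simp

lemma L1_norm_nonneg: "L1_norm M g \<ge> 0"
  unfolding L1_norm_def by simp

definition dn :: "'b::real_normed_vector \<Rightarrow> 'b \<Rightarrow> real" where
  "dn x = (if x \<noteq> 0 \<and> (\<exists>\<phi>. (norm has_derivative \<phi>) (at x))
           then (SOME \<phi>. (norm has_derivative \<phi>) (at x)) else (\<lambda>_. 0))"

lemma dn_deriv:
  assumes "x \<noteq> 0" "(norm has_derivative \<phi>) (at x)"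
  shows "(norm has_derivative dn x) (at x)"
proof -
  have "(norm has_derivative (SOME \<phi>. (norm has_derivative \<phi>) (at x))) (at x)"
    using someI_ex[of "\<lambda>\<phi>. (norm has_derivative \<phi>) (at x)"] assms by blast
  then show ?thesis using assms unfolding dn_def by auto
qed

lemma dn_linear: "linear (dn x)"
proof (cases "x \<noteq> 0 \<and> (\<exists>\<phi>. (norm has_derivative \<phi>) (at x))")
  case True
  then show ?thesis using dn_deriv[of x] has_derivative_bounded_linear bounded_linear.linear by blast
next
  case False
  then have "dn x = (\<lambda>_. 0)" unfolding dn_def by auto
  then show ?thesis by (simp add: linear_zero)
qed

lemma dn_lim:
  fixes x h :: "'b::real_normed_vector"
  assumes "x \<noteq> 0" "(norm has_derivative \<phi>) (at x)"
  shows "(\<lambda>n. real n * (norm (x + (1 / real n) *\<^sub>R h) - norm x)) \<longlonglongrightarrow> dn x h"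
proof -
  have d: "(norm has_derivative dn x) (at x)" using dn_deriv[OF assms] .
  have d0: "(norm has_derivative dn x) (at (x + 0 *\<^sub>R h))" using d by simp
  have l: "((\<lambda>t::real. x + t *\<^sub>R h) has_derivative (\<lambda>t. t *\<^sub>R h)) (at 0)"
    by (auto intro!: derivative_eq_intros)
  have "((\<lambda>t. norm (x + t *\<^sub>R h)) has_derivative (\<lambda>t. dn x (t *\<^sub>R h))) (at 0)"
    using has_derivative_compose[OF l d0] by (simp add: o_def)
  moreover have "(\<lambda>t. dn x (t *\<^sub>R h)) = (\<lambda>t. dn x h * t)"
    using dn_linear[of x] by (auto simp: linear_scale)
  ultimately have "((\<lambda>t. norm (x + t *\<^sub>R h)) has_field_derivative dn x h) (at 0)"
    unfolding has_field_derivative_def by simp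
  then have L: "((\<lambda>y. (norm (x + y *\<^sub>R h) - norm (x + 0 *\<^sub>R h)) / (y - 0)) \<longlongrightarrow> dn x h) (at 0)"
    unfolding has_field_derivative_iff .
  have s: "(\<lambda>n. 1 / real (Suc n)) \<longlonglongrightarrow> 0"
    using LIMSEQ_Suc[OF lim_const_over_n[of 1]] by simp
  have "(\<lambda>n. (norm (x + (1 / real (Suc n)) *\<^sub>R h) - norm (x + 0 *\<^sub>R h)) / (1 / real (Suc n) - 0)) \<longlonglongrightarrow> dn x h"
    using L s unfolding LIMSEQ_SEQ_conv[symmetric] by (elim allE[of _ "\<lambda>n. 1 / real (Suc n)"]) simp
  then have "(\<lambda>n. real (Suc n) * (norm (x + (1 / real (Suc n)) *\<^sub>R h) - norm x)) \<longlonglongrightarrow> dn x h"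
    by (simp add: mult.commute)
  then show ?thesis by (rule LIMSEQ_imp_Suc)
qed

lemma dn_bound: "\<bar>dn x h\<bar> \<le> norm h"
proof (cases "x \<noteq> 0 \<and> (\<exists>\<phi>. (norm has_derivative \<phi>) (at x))")
  case True
  then obtain \<phi> where x: "x \<noteq> 0" "(norm has_derivative \<phi>) (at x)" by blast
  have "(\<lambda>n. \<bar>real n * (norm (x + (1 / real n) *\<^sub>R h) - norm x)\<bar>) \<longlonglongrightarrow> \<bar>dn x h\<bar>"
    using dn_lim[OF x, of h] by (rule tendsto_rabs)
  moreover have "\<bar>real n * (norm (x + (1 / real n) *\<^sub>R h) - norm x)\<bar> \<le> norm h" for n
  proof (cases "n = 0")
    case False
    have "\<bar>norm (x + (1 / real n) *\<^sub>R h) - norm x\<bar> \<le> norm ((1 / real n) *\<^sub>R h)"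
      using norm_triangle_ineq3[of "x + (1 / real n) *\<^sub>R h" x] by simp
    also have "\<dots> = norm h / real n" by simp
    finally have "real n * \<bar>norm (x + (1 / real n) *\<^sub>R h) - norm x\<bar> \<le> real n * (norm h / real n)"
      by (intro mult_left_mono) auto
    then show ?thesis using False by (simp add: abs_mult)
  qed simp
  ultimately show ?thesis by (intro LIMSEQ_le_const2) auto
next
  case False
  then show ?thesis unfolding dn_def by auto
qed

lemma dn_self:
  fixes x :: "'b::real_normed_vector"
  assumes "x \<noteq> 0" "(norm has_derivative \<phi>) (at x)"
  shows "dn x x = norm x"
proof -
  have "\<forall>n\<ge>1. norm x = real n * (norm (x + (1 / real n) *\<^sub>R x) - norm x)"
  proof (intro allI impI)
    fix n :: nat assume "1 \<le> n"
    then have n: "real n > 0" by simp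
    have "x + (1 / real n) *\<^sub>R x = (1 + 1 / real n) *\<^sub>R x" by (simp add: algebra_simps)
    then have "norm (x + (1 / real n) *\<^sub>R x) = (1 + 1 / real n) * norm x"
      using n by simp
    then show "norm x = real n * (norm (x + (1 / real n) *\<^sub>R x) - norm x)"
      using n by (simp add: field_simps)
  qed
  then have "(\<lambda>n. real n * (norm (x + (1 / real n) *\<^sub>R x) - norm x)) \<longlonglongrightarrow> norm x"
    by (intro Lim_transform_eventually[OF tendsto_const]) (auto simp: eventually_sequentially intro!: exI[of _ 1])
  then show ?thesis using dn_lim[OF assms, of x] LIMSEQ_unique by blast
qed

lemma dn_zero: "dn 0 = (\<lambda>_. 0)"
  unfolding dn_def by simp

lemma dn_bl: "bounded_linear (dn x)"
proof -
  have l: "linear (dn x)" by (rule dn_linear)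
  show ?thesis
    by (rule bounded_linear_intro[where K=1])
       (use l dn_bound[of x] in \<open>auto simp: linear_add linear_scale\<close>)
qed

lemma dn_meas_const:
  assumes "g \<in> borel_measurable M"
  shows "(\<lambda>s. dn x (g s)) \<in> borel_measurable M"
proof -
  have "dn x \<in> borel_measurable borel"
    by (intro borel_measurable_continuous_onI linear_continuous_on dn_bl)
  then show ?thesis using assms by (rule measurable_compose[rotated])
qed

lemma dn_meas:
  fixes f g :: "'a \<Rightarrow> 'b::real_normed_vector"
  assumes c: "complete_measure M" and FR: "frechet_smooth_norm TYPE('b)"
    and Lf: "L1 M f" and Lg: "L1 M g"
  shows "(\<lambda>s. dn (f s) (g s)) \<in> borel_measurable M"
proof -
  have fm: "f \<in> borel_measurable M" using SM_meas[OF c] Lf unfolding L1_def by blast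
  have hm: "(\<lambda>s. norm (f s + (1 / real n) *\<^sub>R g s)) \<in> borel_measurable M" for n
  proof -
    have "(\<lambda>s. f s + (1 / real n) *\<^sub>R g s) \<in> borel_measurable M"
      using SM_meas[OF c] SM_lin Lf Lg unfolding L1_def by blast
    then show ?thesis by measurable
  qed
  have z: "{s \<in> space M. f s = 0} \<in> sets M"
  proof -
    have "f -` {0} \<inter> space M \<in> sets M" using fm by (rule measurable_sets) auto
    moreover have "f -` {0} \<inter> space M = {s \<in> space M. f s = 0}" by blast
    ultimately show ?thesis by (simp only:)
  qed
  have um: "(\<lambda>s. if s \<in> {s \<in> space M. f s = 0} then 0 else real n * (norm (f s + (1 / real n) *\<^sub>R g s) - norm (f s))) \<in> borel_measurable M" for n
    by (rule measurable_If_set) (use hm fm z in auto)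
  show ?thesis
  proof (rule borel_measurable_LIMSEQ_real[OF _ um])
    fix s assume s: "s \<in> space M"
    show "(\<lambda>n. if s \<in> {s \<in> space M. f s = 0} then 0 else real n * (norm (f s + (1 / real n) *\<^sub>R g s) - norm (f s))) \<longlonglongrightarrow> dn (f s) (g s)"
    proof (cases "f s = 0")
      case True then show ?thesis using s by (simp add: dn_zero)
    next
      case False
      then obtain \<phi> where "(norm has_derivative \<phi>) (at (f s))"
        using FR unfolding frechet_smooth_norm_def by blast
      then show ?thesis using dn_lim[OF False, of \<phi> "g s"] False by simp
    qed
  qed
qed

definition Fn :: "'a measure \<Rightarrow> ('a \<Rightarrow> 'b::real_normed_vector) \<Rightarrow> 'a set \<Rightarrow> real \<Rightarrow> 'b \<Rightarrow> ('a \<Rightarrow> 'b) \<Rightarrow> real" where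
  "Fn M f E \<sigma> x g = (\<integral>s. dn (f s) (g s) + \<sigma> * indicator E s * dn x (g s) \<partial>M)"

lemma Fn_props:
  fixes f :: "'a \<Rightarrow> 'b::real_normed_vector"
  assumes c: "complete_measure M" and FR: "frechet_smooth_norm TYPE('b)"
    and Lf: "L1 M f" and E: "E \<in> sets M" and Ez: "\<forall>s\<in>E. f s = 0" and \<sigma>: "\<bar>\<sigma>\<bar> \<le> 1"
  shows "\<And>g. L1 M g \<Longrightarrow> integrable M (\<lambda>s. dn (f s) (g s) + \<sigma> * indicator E s * dn x (g s))"
    and "\<And>g. L1 M g \<Longrightarrow> \<bar>Fn M f E \<sigma> x g\<bar> \<le> L1_norm M g"
    and "Fn M f E \<sigma> x f = L1_norm M f"
    and "Fn M f E \<sigma> x \<in> L1_dual M"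
    and "L1_norm M f \<noteq> 0 \<Longrightarrow> Fn M f E \<sigma> x \<in> support_functionals M f"
proof -
  have pb: "\<bar>dn (f s) y + \<sigma> * indicator E s * dn x y\<bar> \<le> norm y" for s y
  proof (cases "s \<in> E")
    case True
    then have "\<bar>dn (f s) y + \<sigma> * indicator E s * dn x y\<bar> = \<bar>\<sigma>\<bar> * \<bar>dn x y\<bar>"
      using Ez by (simp add: dn_zero abs_mult)
    also have "\<dots> \<le> 1 * norm y" using \<sigma> dn_bound[of x y] by (intro mult_mono) auto
    finally show ?thesis by simp
  next
    case False
    then show ?thesis using dn_bound[of "f s" y] by simp
  qed
  have meas: "(\<lambda>s. dn (f s) (g s) + \<sigma> * indicator E s * dn x (g s)) \<in> borel_measurable M"
    if Lg: "L1 M g" for g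
  proof -
    have gm: "g \<in> borel_measurable M" using SM_meas[OF c] Lg unfolding L1_def by blast
    have [measurable]: "(\<lambda>s. dn (f s) (g s)) \<in> borel_measurable M" using dn_meas[OF c FR Lf Lg] .
    have [measurable]: "(\<lambda>s. dn x (g s)) \<in> borel_measurable M" using dn_meas_const[OF gm] .
    show ?thesis using E by measurable
  qed
  show int: "integrable M (\<lambda>s. dn (f s) (g s) + \<sigma> * indicator E s * dn x (g s))" if Lg: "L1 M g" for g
    by (rule Bochner_Integration.integrable_bound[OF L1_int(1)[OF c Lg] meas[OF Lg]]) (use pb in auto)
  show bd: "\<bar>Fn M f E \<sigma> x g\<bar> \<le> L1_norm M g" if Lg: "L1 M g" for g
  proof -
    have "\<bar>Fn M f E \<sigma> x g\<bar> \<le> (\<integral>s. norm (dn (f s) (g s) + \<sigma> * indicator E s * dn x (g s)) \<partial>M)"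
      unfolding Fn_def using integral_norm_bound[of M "\<lambda>s. dn (f s) (g s) + \<sigma> * indicator E s * dn x (g s)"]
      by simp
    also have "\<dots> \<le> (\<integral>s. norm (g s) \<partial>M)"
      by (rule integral_mono[OF integrable_norm[OF int[OF Lg]] L1_int(1)[OF c Lg]]) (use pb in simp)
    finally show ?thesis using L1_int(2)[OF c Lg] by simp
  qed
  show self: "Fn M f E \<sigma> x f = L1_norm M f"
  proof -
    have "Fn M f E \<sigma> x f = (\<integral>s. norm (f s) \<partial>M)"
      unfolding Fn_def
    proof (rule Bochner_Integration.integral_cong[OF refl])
      fix s assume "s \<in> space M"
      show "dn (f s) (f s) + \<sigma> * indicator E s * dn x (f s) = norm (f s)"
      proof (cases "s \<in> E")
        case True then show ?thesis using Ez linear_0[OF dn_linear[of x]] by (simp add: dn_zero)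
      next
        case False
        show ?thesis
        proof (cases "f s = 0")
          case True then show ?thesis using False by (simp add: dn_zero)
        next
          case nz: False
          then obtain \<phi> where "(norm has_derivative \<phi>) (at (f s))"
            using FR unfolding frechet_smooth_norm_def by blast
          then show ?thesis using dn_self[OF nz] False by simp
        qed
      qed
    qed
    then show ?thesis using L1_int(2)[OF c Lf] by simp
  qed
  show dual: "Fn M f E \<sigma> x \<in> L1_dual M"
    unfolding L1_dual_def
  proof (intro CollectI conjI allI impI)
    fix g h :: "'a \<Rightarrow> 'b" assume Lg: "L1 M g" and Lh: "L1 M h"
    have "Fn M f E \<sigma> x (\<lambda>s. g s + h s) =
      (\<integral>s. (dn (f s) (g s) + \<sigma> * indicator E s * dn x (g s)) + (dn (f s) (h s) + \<sigma> * indicator E s * dn x (h s)) \<partial>M)"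
      unfolding Fn_def
      by (rule Bochner_Integration.integral_cong[OF refl])
         (simp add: linear_add[OF dn_linear] algebra_simps)
    also have "\<dots> = Fn M f E \<sigma> x g + Fn M f E \<sigma> x h"
      unfolding Fn_def by (rule Bochner_Integration.integral_add[OF int[OF Lg] int[OF Lh]])
    finally show "Fn M f E \<sigma> x (\<lambda>s. g s + h s) = Fn M f E \<sigma> x g + Fn M f E \<sigma> x h" .
  next
    fix r and g :: "'a \<Rightarrow> 'b" assume Lg: "L1 M g"
    have "Fn M f E \<sigma> x (\<lambda>s. r *\<^sub>R g s) =
      (\<integral>s. r * (dn (f s) (g s) + \<sigma> * indicator E s * dn x (g s)) \<partial>M)"
      unfolding Fn_def
      by (rule Bochner_Integration.integral_cong[OF refl])
         (simp add: linear_scale[OF dn_linear] algebra_simps)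
    also have "\<dots> = r * Fn M f E \<sigma> x g"
      unfolding Fn_def by simp
    finally show "Fn M f E \<sigma> x (\<lambda>s. r *\<^sub>R g s) = r * Fn M f E \<sigma> x g" .
  next
    show "\<exists>K. \<forall>g. L1 M g \<longrightarrow> \<bar>Fn M f E \<sigma> x g\<bar> \<le> K * L1_norm M g"
      using bd by (intro exI[of _ 1]) auto
  qed
  assume nz: "L1_norm M f \<noteq> 0"
  define B :: "('a \<Rightarrow> 'b) set" where "B = {g. L1 M g \<and> L1_norm M g \<le> 1}"
  have B0: "(\<lambda>s. 0) \<in> B" unfolding B_def by (simp add: L1_zero L1_norm_def)
  have bdd: "bdd_above ((\<lambda>g. \<bar>Fn M f E \<sigma> x g\<bar>) ` B)"
    by (rule bdd_aboveI2[where M=1]) (use bd in \<open>force simp: B_def\<close>)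
  have "L1_dual_norm M (Fn M f E \<sigma> x) = 1"
    unfolding L1_dual_norm_def B_def[symmetric]
  proof (rule antisym)
    show "(SUP g\<in>B. \<bar>Fn M f E \<sigma> x g\<bar>) \<le> 1"
      by (rule cSUP_least) (use B0 bd in \<open>force simp: B_def\<close>)+
  next
    define g0 where "g0 = (\<lambda>s. (1 / L1_norm M f) *\<^sub>R f s)"
    have pos: "L1_norm M f > 0" using nz L1_norm_nonneg[of M f] by linarith
    have g0B: "g0 \<in> B" unfolding B_def g0_def
      using L1_scale[OF c Lf] L1_norm_scale[OF c Lf] pos by simp
    have "Fn M f E \<sigma> x g0 = 1"
      using dual Lf self pos unfolding L1_dual_def g0_def by auto
    then have "1 \<le> \<bar>Fn M f E \<sigma> x g0\<bar>" by simp
    also have "\<dots> \<le> (SUP g\<in>B. \<bar>Fn M f E \<sigma> x g\<bar>)" by (rule cSUP_upper[OF g0B bdd])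
    finally show "1 \<le> (SUP g\<in>B. \<bar>Fn M f E \<sigma> x g\<bar>)" .
  qed
  then show "Fn M f E \<sigma> x \<in> support_functionals M f"
    unfolding support_functionals_def using dual self by simp
qed

lemma seq_bound:
  fixes x h :: "'b::real_normed_vector"
  shows "\<bar>real n * (norm (x + (1 / real n) *\<^sub>R h) - norm x)\<bar> \<le> norm h"
proof (cases "n = 0")
  case False
  have "\<bar>norm (x + (1 / real n) *\<^sub>R h) - norm x\<bar> \<le> norm ((1 / real n) *\<^sub>R h)"
    using norm_triangle_ineq3[of "x + (1 / real n) *\<^sub>R h" x] by simp
  also have "\<dots> = norm h / real n" by simp
  finally have "real n * \<bar>norm (x + (1 / real n) *\<^sub>R h) - norm x\<bar> \<le> real n * (norm h / real n)"
    by (intro mult_left_mono) auto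
  then show ?thesis using False by (simp add: abs_mult)
qed simp

lemma dual_bdd:
  fixes F :: "('a \<Rightarrow> 'b::real_normed_vector) \<Rightarrow> real"
  assumes "F \<in> L1_dual M"
  shows "bdd_above ((\<lambda>g. \<bar>F g\<bar>) ` {g. L1 M g \<and> L1_norm M g \<le> 1})"
proof -
  obtain K where K: "\<And>g::'a \<Rightarrow> 'b. L1 M g \<Longrightarrow> \<bar>F g\<bar> \<le> K * L1_norm M g"
    using assms unfolding L1_dual_def by blast
  show ?thesis
  proof (rule bdd_aboveI2[where M="\<bar>K\<bar>"])
    fix g :: "'a \<Rightarrow> 'b" assume g: "g \<in> {g. L1 M g \<and> L1_norm M g \<le> 1}"
    then have "\<bar>F g\<bar> \<le> K * L1_norm M g" using K by auto
    also have "\<dots> \<le> \<bar>K\<bar> * L1_norm M g" using L1_norm_nonneg[of M g] by (intro mult_right_mono) auto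
    also have "\<dots> \<le> \<bar>K\<bar> * 1" using g by (intro mult_left_mono) auto
    finally show "\<bar>F g\<bar> \<le> \<bar>K\<bar>" by simp
  qed
qed

lemma J_le:
  fixes f g :: "'a \<Rightarrow> 'b::real_normed_vector"
  assumes c: "complete_measure M" and F: "F \<in> support_functionals M f" and Lg: "L1 M g"
  shows "\<bar>F g\<bar> \<le> L1_norm M g"
proof -
  have Fd: "F \<in> L1_dual M" and n1: "L1_dual_norm M F = 1"
    using F unfolding support_functionals_def by auto
  obtain K where K: "\<And>g::'a \<Rightarrow> 'b. L1 M g \<Longrightarrow> \<bar>F g\<bar> \<le> K * L1_norm M g"
    using Fd unfolding L1_dual_def by blast
  show ?thesis
  proof (cases "L1_norm M g = 0")
    case True then show ?thesis using K[OF Lg] by simp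
  next
    case False
    then have pos: "L1_norm M g > 0" using L1_norm_nonneg[of M g] by linarith
    define h where "h = (\<lambda>s. (1 / L1_norm M g) *\<^sub>R g s)"
    have hB: "h \<in> {g. L1 M g \<and> L1_norm M g \<le> 1}"
      unfolding h_def using L1_scale[OF c Lg] L1_norm_scale[OF c Lg] pos by simp
    have "\<bar>F h\<bar> \<le> L1_dual_norm M F"
      unfolding L1_dual_norm_def by (rule cSUP_upper[OF hB dual_bdd[OF Fd]])
    moreover have "F h = F g / L1_norm M g"
      using Fd Lg unfolding L1_dual_def h_def by auto
    ultimately have "\<bar>F g\<bar> / L1_norm M g \<le> 1" using n1 pos by simp
    then show ?thesis using pos by (simp add: divide_le_eq)
  qed
qed

lemma J_diff_le2:
  fixes f :: "'a \<Rightarrow> 'b::real_normed_vector"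
  assumes c: "complete_measure M" and F: "F \<in> support_functionals M f" and G: "G \<in> support_functionals M f"
  shows "L1_dual_norm M (\<lambda>g. F g - G g) \<le> 2"
    and "bdd_above ((\<lambda>g. \<bar>F g - G g\<bar>) ` {g. L1 M g \<and> L1_norm M g \<le> 1})"
proof -
  have b: "\<bar>F g - G g\<bar> \<le> 2" if "g \<in> {g. L1 M g \<and> L1_norm M g \<le> 1}" for g
    using J_le[OF c F, of g] J_le[OF c G, of g] that by auto
  show "bdd_above ((\<lambda>g. \<bar>F g - G g\<bar>) ` {g. L1 M g \<and> L1_norm M g \<le> 1})"
    by (rule bdd_aboveI2[where M=2]) (rule b)
  have ne: "{g :: 'a \<Rightarrow> 'b. L1 M g \<and> L1_norm M g \<le> 1} \<noteq> {}"
    using L1_zero[of M] by (auto simp: L1_norm_def)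
  show "L1_dual_norm M (\<lambda>g. F g - G g) \<le> 2"
    unfolding L1_dual_norm_def by (rule cSUP_least[OF ne]) (rule b)
qed

lemma J_le_D:
  fixes f g :: "'a \<Rightarrow> 'b::real_normed_vector"
  assumes c: "complete_measure M" and FR: "frechet_smooth_norm TYPE('b)"
    and Lf: "L1 M f" and ae: "AE s in M. f s \<noteq> 0"
    and F: "F \<in> support_functionals M f" and Lg: "L1 M g"
  shows "F g \<le> Fn M f {} 0 0 g"
proof -
  define q where "q n = real n * (L1_norm M (\<lambda>s. f s + (1 / real n) *\<^sub>R g s) - L1_norm M f)" for n
  define sn where "sn n s = real n * (norm (f s + (1 / real n) *\<^sub>R g s) - norm (f s))" for n s
  have Fd: "F \<in> L1_dual M" and Ff: "F f = L1_norm M f"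
    using F unfolding support_functionals_def by auto
  have Lfn: "L1 M (\<lambda>s. f s + (1 / real n) *\<^sub>R g s)" for n using L1_lin[OF c Lf Lg] .
  have hm: "(\<lambda>s. norm (f s + (1 / real n) *\<^sub>R g s)) \<in> borel_measurable M" for n
  proof -
    have "(\<lambda>s. f s + (1 / real n) *\<^sub>R g s) \<in> borel_measurable M"
      using SM_meas[OF c] Lfn unfolding L1_def by blast
    then show ?thesis by measurable
  qed
  have fm: "(\<lambda>s. norm (f s)) \<in> borel_measurable M"
    using L1_int(1)[OF c Lf] by auto
  have snm: "sn n \<in> borel_measurable M" for n
    unfolding sn_def using hm[of n] fm by measurable
  have qn: "q n = integral\<^sup>L M (sn n)" for n
  proof -
    have "q n = real n * ((\<integral>s. norm (f s + (1 / real n) *\<^sub>R g s) \<partial>M) - (\<integral>s. norm (f s) \<partial>M))"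
      unfolding q_def L1_int(2)[OF c Lfn] L1_int(2)[OF c Lf] ..
    also have "\<dots> = real n * (\<integral>s. norm (f s + (1 / real n) *\<^sub>R g s) - norm (f s) \<partial>M)"
      using Bochner_Integration.integral_diff[OF L1_int(1)[OF c Lfn] L1_int(1)[OF c Lf]] by simp
    also have "\<dots> = integral\<^sup>L M (sn n)" unfolding sn_def by simp
    finally show ?thesis .
  qed
  have lim: "(\<lambda>n. integral\<^sup>L M (sn n)) \<longlonglongrightarrow> (\<integral>s. dn (f s) (g s) \<partial>M)"
  proof (rule integral_dominated_convergence[OF dn_meas[OF c FR Lf Lg] snm L1_int(1)[OF c Lg]])
    show "AE s in M. (\<lambda>n. sn n s) \<longlonglongrightarrow> dn (f s) (g s)"
      using ae
    proof eventually_elim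
      case (elim s)
      then obtain \<phi> where "(norm has_derivative \<phi>) (at (f s))"
        using FR unfolding frechet_smooth_norm_def by blast
      then show ?case unfolding sn_def using dn_lim[OF elim] by blast
    qed
    show "AE s in M. norm (sn n s) \<le> norm (g s)" for n
      unfolding sn_def using seq_bound by auto
  qed
  have D: "Fn M f {} 0 0 g = (\<integral>s. dn (f s) (g s) \<partial>M)" unfolding Fn_def by simp
  have "q \<longlonglongrightarrow> Fn M f {} 0 0 g" using lim unfolding D qn[symmetric] by (simp add: fun_eq_iff)
  moreover have "F g \<le> q n" if n: "n \<ge> 1" for n
  proof -
    have sc: "L1 M (\<lambda>s. (1 / real n) *\<^sub>R g s)" using L1_scale[OF c Lg] .
    have "F (\<lambda>s. f s + (1 / real n) *\<^sub>R g s) = F f + F (\<lambda>s. (1 / real n) *\<^sub>R g s)"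
      using Fd Lf sc unfolding L1_dual_def by blast
    also have "\<dots> = L1_norm M f + (1 / real n) * F g"
      using Fd Lg Ff unfolding L1_dual_def by auto
    finally have e: "F (\<lambda>s. f s + (1 / real n) *\<^sub>R g s) = L1_norm M f + (1 / real n) * F g" .
    have "F (\<lambda>s. f s + (1 / real n) *\<^sub>R g s) \<le> L1_norm M (\<lambda>s. f s + (1 / real n) *\<^sub>R g s)"
      using J_le[OF c F Lfn[of n]] by simp
    then have "(1 / real n) * F g \<le> L1_norm M (\<lambda>s. f s + (1 / real n) *\<^sub>R g s) - L1_norm M f"
      using e by simp
    then have "real n * ((1 / real n) * F g) \<le> q n"
      unfolding q_def by (intro mult_left_mono) auto
    then show ?thesis using n by simp
  qed
  ultimately show ?thesis by (intro LIMSEQ_le_const) auto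
qed

lemma J_eq_D:
  fixes f g :: "'a \<Rightarrow> 'b::real_normed_vector"
  assumes c: "complete_measure M" and FR: "frechet_smooth_norm TYPE('b)"
    and Lf: "L1 M f" and ae: "AE s in M. f s \<noteq> 0"
    and F: "F \<in> support_functionals M f" and Lg: "L1 M g"
  shows "F g = Fn M f {} 0 0 g"
proof -
  have Fd: "F \<in> L1_dual M" using F unfolding support_functionals_def by auto
  have Dd: "Fn M f {} 0 0 \<in> L1_dual M" using Fn_props(4)[OF c FR Lf, of "{}" 0] by simp
  have Lm: "L1 M (\<lambda>s. (-1) *\<^sub>R g s)" using L1_scale[OF c Lg] .
  have "F (\<lambda>s. (-1) *\<^sub>R g s) \<le> Fn M f {} 0 0 (\<lambda>s. (-1) *\<^sub>R g s)"
    by (rule J_le_D[OF c FR Lf ae F Lm])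
  moreover have "F (\<lambda>s. (-1) *\<^sub>R g s) = (-1) * F g" using Fd Lg unfolding L1_dual_def by blast
  moreover have "Fn M f {} 0 0 (\<lambda>s. (-1) *\<^sub>R g s) = (-1) * Fn M f {} 0 0 g" using Dd Lg unfolding L1_dual_def by blast
  ultimately show ?thesis using J_le_D[OF c FR Lf ae F Lg] by simp
qed

lemma sf_pos:
  assumes sf: "sigma_finite_measure M" and Zs: "Z \<in> sets M" and Zn: "Z \<notin> null_sets M"
  obtains A where "A \<in> sets M" "A \<subseteq> Z" "0 < emeasure M A" "emeasure M A < \<infinity>"
proof -
  obtain C :: "nat \<Rightarrow> 'a set" where C: "range C \<subseteq> sets M" "(\<Union>i. C i) = space M"
    "\<And>i. emeasure M (C i) \<noteq> \<infinity>"
    by (rule sigma_finite_measure.sigma_finite[OF sf]) blast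
  have "\<exists>i. Z \<inter> C i \<notin> null_sets M"
  proof (rule ccontr)
    assume "\<not> ?thesis"
    then have "\<And>i. Z \<inter> C i \<in> null_sets M" by blast
    then have 1: "(\<Union>i. Z \<inter> C i) \<in> null_sets M" by (rule null_sets_UN)
    have "Z \<subseteq> space M" using Zs by (rule sets.sets_into_space)
    then have "Z \<subseteq> (\<Union>i. C i)" using C(2) by simp
    then have "(\<Union>i. Z \<inter> C i) = Z" by blast
    then show False using 1 Zn by simp
  qed
  then obtain i where i: "Z \<inter> C i \<notin> null_sets M" by blast
  have Ci: "C i \<in> sets M" using C(1) by (rule range_subsetD)
  have s: "Z \<inter> C i \<in> sets M" using Zs Ci by (rule sets.Int)
  have "emeasure M (Z \<inter> C i) \<le> emeasure M (C i)" by (rule emeasure_mono[OF _ Ci]) blast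
  then have "emeasure M (Z \<inter> C i) < \<infinity>" using C(3)[of i] by (simp add: less_top)
  moreover have "0 < emeasure M (Z \<inter> C i)" using i s by (simp add: null_sets_def zero_less_iff_neq_zero)
  moreover have "Z \<inter> C i \<subseteq> Z" by blast
  ultimately show ?thesis using that[of "Z \<inter> C i"] s by blast
qed

theorem corollary3p3:
  fixes M :: "'a measure" and f :: "'a \<Rightarrow> 'b::banach"
  assumes "complete_measure M"
    and "sigma_finite_measure M"
    and "frechet_smooth_norm TYPE('b)"
    and "L1 M f"
    and "L1_norm M f \<noteq> 0"
  shows "approx_smooth_L1 M f \<longleftrightarrow> (AE s in M. f s \<noteq> 0)"
proof -
  note c = assms(1) and FR = assms(3) and Lf = assms(4) and nz = assms(5)
  define J where "J = support_functionals M f"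
  define B :: "('a \<Rightarrow> 'b) set" where "B = {g. L1 M g \<and> L1_norm M g \<le> 1}"
  have B0: "(\<lambda>s. 0) \<in> B" unfolding B_def by (simp add: L1_zero L1_norm_def)
  have D_J: "Fn M f {} 0 0 \<in> J" using Fn_props(5)[OF c FR Lf, of "{}" 0 0] nz unfolding J_def by simp
  have bddJ: "bdd_above ((\<lambda>(F,G). L1_dual_norm M (\<lambda>g. F g - G g)) ` (J \<times> J))"
    by (rule bdd_aboveI2[where M=2]) (auto simp: J_def intro: J_diff_le2(1)[OF c])
  show ?thesis
  proof
    assume as: "approx_smooth_L1 M f"
    show "AE s in M. f s \<noteq> 0"
    proof (rule ccontr)
      assume nae: "\<not> (AE s in M. f s \<noteq> 0)"
      have fm: "f \<in> borel_measurable M" using SM_meas[OF c] Lf unfolding L1_def by blast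
      define Z where "Z = {s\<in>space M. f s = 0}"
      have Zs: "Z \<in> sets M"
      proof -
        have "f -` {0} \<inter> space M \<in> sets M" using fm by (rule measurable_sets) auto
        moreover have "f -` {0} \<inter> space M = Z" unfolding Z_def by blast
        ultimately show ?thesis by (simp only:)
      qed
      have Zn: "Z \<notin> null_sets M"
      proof
        assume "Z \<in> null_sets M"
        then have h: "{s\<in>space M. \<not> f s \<noteq> 0} \<in> null_sets M" unfolding Z_def by (simp only: not_not)
        have eq: "(AE s in M. f s \<noteq> 0) \<longleftrightarrow> {s\<in>space M. \<not> f s \<noteq> 0} \<in> null_sets M"
          by (rule complete_measure.AE_iff_null_sets[OF c])
        show False using nae iffD2[OF eq h] by contradiction
      qed
      obtain A where A: "A \<in> sets M" "A \<subseteq> Z" "0 < emeasure M A" "emeasure M A < \<infinity>"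
        by (rule sf_pos[OF assms(2) Zs Zn])
      have Az: "\<forall>s\<in>A. f s = 0" using A(2) unfolding Z_def by blast
      have ex: "\<exists>s. f s \<noteq> 0"
      proof (rule ccontr)
        assume "\<not> (\<exists>s. f s \<noteq> 0)"
        then have "\<And>s. f s = 0" by blast
        then have "f = (\<lambda>s. 0)" by (rule ext)
        moreover have "L1_norm M (\<lambda>s. 0::'b) = 0" unfolding L1_norm_def by simp
        ultimately show False using nz by simp
      qed
      then obtain s0 where s0: "f s0 \<noteq> 0" by blast
      define x where "x = f s0"
      have x: "x \<noteq> 0" using s0 unfolding x_def .
      have "\<exists>\<phi>. (norm has_derivative \<phi>) (at x)" using FR x unfolding frechet_smooth_norm_def by blast
      then obtain \<phi> where \<phi>: "(norm has_derivative \<phi>) (at x)" by blast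
      define m where "m = measure M A"
      have em: "emeasure M A = ennreal m" unfolding m_def using A(4) by (intro emeasure_eq_ennreal_measure) auto
      have mpos: "m > 0" unfolding m_def measure_def using A(3,4) by (simp add: enn2real_positive_iff)
      define v where "v = (1 / (norm x * m)) *\<^sub>R x"
      have nv: "norm v = 1 / m" unfolding v_def using x mpos by simp
      define g0 where "g0 = (\<lambda>s. indicator A s *\<^sub>R v)"
      have sg0: "simple_function M g0"
        unfolding g0_def by (rule simple_function_compose1[OF simple_function_indicator[OF A(1)]])
      have "(\<integral>\<^sup>+ s. ennreal (norm (g0 s)) \<partial>M) = (\<integral>\<^sup>+ s. ennreal (norm v) * indicator A s \<partial>M)"
        unfolding g0_def by (intro nn_integral_cong) (auto split: split_indicator)
      also have "\<dots> = ennreal (norm v) * emeasure M A" by (rule nn_integral_cmult_indicator[OF A(1)])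
      finally have "(\<integral>\<^sup>+ s. ennreal (norm (g0 s)) \<partial>M) < \<infinity>" using A(4) by (simp add: em ennreal_mult_less_top)
      then have Lg0: "L1 M g0" unfolding L1_def using SM_simple[OF sg0] by blast
      have "L1_norm M g0 = (\<integral>s. norm (g0 s) \<partial>M)" by (rule L1_int(2)[OF c Lg0])
      also have "\<dots> = (\<integral>s. norm v * indicator A s \<partial>M)"
        unfolding g0_def
        by (intro Bochner_Integration.integral_cong) (auto split: split_indicator)
      also have "\<dots> = norm v * m" unfolding m_def using A(1) sets.sets_into_space[OF A(1)]
        by (simp add: Int_absorb2)
      finally have nLg0: "L1_norm M g0 = 1" using nv mpos by simp
      have g0B: "g0 \<in> B" unfolding B_def using Lg0 nLg0 by simp
      have Fval: "Fn M f A \<sigma> x g0 = \<sigma>" for \<sigma>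
      proof -
        have dv: "dn x v = 1 / m"
          unfolding v_def using linear_scale[OF dn_linear[of x]] dn_self[OF x \<phi>] x mpos by simp
        have "Fn M f A \<sigma> x g0 = (\<integral>s. (\<sigma> / m) * indicator A s \<partial>M)"
          unfolding Fn_def
        proof (intro Bochner_Integration.integral_cong refl)
          fix s assume "s \<in> space M"
          show "dn (f s) (g0 s) + \<sigma> * indicator A s * dn x (g0 s) = (\<sigma> / m) * indicator A s"
          proof (cases "s \<in> A")
            case True then show ?thesis using Az dv unfolding g0_def by (simp add: dn_zero)
          next
            case False then show ?thesis unfolding g0_def using linear_0[OF dn_linear[of "f s"]] by simp
          qed
        qed
        also have "\<dots> = \<sigma> / m * m" unfolding m_def using A(1) sets.sets_into_space[OF A(1)]
          by (simp add: Int_absorb2)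
        finally show ?thesis using mpos by simp
      qed
      define Fp where "Fp = Fn M f A 1 x"
      define Fm where "Fm = Fn M f A (-1) x"
      have FpJ: "Fp \<in> J" unfolding Fp_def J_def using Fn_props(5)[OF c FR Lf A(1) Az, of 1 x] nz by simp
      have FmJ: "Fm \<in> J" unfolding Fm_def J_def using Fn_props(5)[OF c FR Lf A(1) Az, of "-1" x] nz by simp
      have "2 = \<bar>Fp g0 - Fm g0\<bar>" unfolding Fp_def Fm_def Fval by simp
      also have "\<dots> \<le> L1_dual_norm M (\<lambda>g. Fp g - Fm g)"
        unfolding L1_dual_norm_def
        by (rule cSUP_upper[OF g0B[unfolded B_def] J_diff_le2(2)[OF c FpJ[unfolded J_def] FmJ[unfolded J_def]]])
      also have "\<dots> = (\<lambda>(F,G). L1_dual_norm M (\<lambda>g. F g - G g)) (Fp, Fm)" by simp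
      also have "\<dots> \<le> diam_J M f"
        unfolding diam_J_def J_def[symmetric] by (rule cSUP_upper[OF _ bddJ]) (use FpJ FmJ in simp)
      finally show False using as unfolding approx_smooth_L1_def by simp
    qed
  next
    assume ae: "AE s in M. f s \<noteq> 0"
    have z: "(\<lambda>(F,G). L1_dual_norm M (\<lambda>g. F g - G g)) p = 0" if p: "p \<in> J \<times> J" for p
    proof -
      obtain F G where pFG: "p = (F, G)" "F \<in> J" "G \<in> J" using p by auto
      have "L1_dual_norm M (\<lambda>g. F g - G g) = (SUP g\<in>B. \<bar>F g - G g\<bar>)"
        unfolding L1_dual_norm_def B_def ..
      also have "\<dots> = (SUP g\<in>B. 0)"
      proof (rule SUP_cong[OF refl])
        fix g assume "g \<in> B"
        then have Lg: "L1 M g" unfolding B_def by simp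
        show "\<bar>F g - G g\<bar> = 0"
          using J_eq_D[OF c FR Lf ae _ Lg, of F] J_eq_D[OF c FR Lf ae _ Lg, of G] pFG
          unfolding J_def by simp
      qed
      also have "\<dots> = 0" using B0 by (intro cSUP_const) auto
      finally show ?thesis using pFG by simp
    qed
    have "diam_J M f = (SUP p\<in>J \<times> J. (0::real))"
      unfolding diam_J_def J_def[symmetric] by (rule SUP_cong[OF refl]) (use z in blast)
    also have "\<dots> = 0" using D_J by (intro cSUP_const) auto
    finally show "approx_smooth_L1 M f" unfolding approx_smooth_L1_def using nz by simp
  qed
qed

end
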